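(* Let $G$ be a second countable locally compact Hausdorff groupoid with a fixed left Haar system $\lambda=\{\lambda^u\}_{u\in G^0}$, and let $(\Phi,\Psi)$ be a complementary pair of $N$-functions with $\Phi\in\Delta_2$. If $\sup_{u\in G^0}\lambda^u(G)<\infty$, then $I_0^\Phi(G,\lambda)\subseteq I(G,\lambda)$ and $E_0^\Phi\subseteq E^1$. In particular, this holds if $G$ is compact.
   Context: $G^0$ is the unit space, $r(x)=xx^{-1}$, $d(x)=x^{-1}x$, $G^u=r^{-1}(u)$; the left Haar system consists of positive Radon measures $\lambda^u$ with support $G^u$, $u\mapsto\int f d\lambda^u$ continuous for $f\in C_c(G)$, and $\int f(xy)d\lambda^{d(x)}(y)=\int f(y)d\lambda^{r(x)}(y)$. An $N$-function is a continuous even convex $\Phi:\mathbb R\to[0,\infty)$ with $\Phi(x)=0$ iff $x=0$, $\Phi(x)/x\to0$ as $x\to0$, $\to\infty$ as $x\to\infty$; complementary function $\Psi(y)=\sup_{x\ge0}(x|y|-\Phi(x))$. $\Phi\in\Delta_2$: there is $k>0$ with $\Phi(2x)\le k\Phi(x)$ for all $x\ge0$ ($G$ non-compact), resp. for $x\ge x_0$, some $x_0>0$ ($G$ compact). $L^\Phi(G^u)$: measurable $f$ on $G^u$ with $\int\Phi(\alpha|f|)d\lambda^u<\infty$ for some $\alpha>0$, gauge norm $\|f\|^0_\Phi=\inf\{k>0:\int\Phi(|f|/k)d\lambda^u\le1\}$. For $f\in C_c(G)$, $f^u=f|_{G^u}$. $I_0^\Phi(G,\lambda)$ is the space of bounded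 sections $\xi=(\xi^u)_{u\in G^0}$, $\xi^u\in L^\Phi(G^u)$, $\sup_u\|\xi^u\|^0_\Phi<\infty$ (not necessarily continuous); $I(G,\lambda)$ is the space of sections with $\xi^u\in L^1(G^u,\lambda^u)$ and $\sup_u\|\xi^u\|_1<\infty$. $E_0^\Phi$ is the space of $\xi\in I_0^\Phi(G,\lambda)$ which are locally close to $C_c(G)$ (for each $u_0$, $\varepsilon>0$ there are $f\in C_c(G)$ and a neighbourhood $V$ of $u_0$ with $\|\xi^v-f^v\|^0_\Phi<\varepsilon$ on $V$) and with $u\mapsto\|\xi^u\|^0_\Phi$ vanishing at infinity; $E^1$ is defined analogously with the $L^1(\lambda^u)$-norms in place of $\|\cdot\|^0_\Phi$. *)

theory Defs
  imports "HOL-Analysis.Analysis"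
begin

text \<open>The groupoid is the whole type 'g; G2 is the set of composable pairs,
  gm the (partial, here totalised) multiplication and gi the inversion.\<close>

definition groupoid :: "('g \<times> 'g) set \<Rightarrow> ('g \<Rightarrow> 'g \<Rightarrow> 'g) \<Rightarrow> ('g \<Rightarrow> 'g) \<Rightarrow> bool" where
  "groupoid G2 gm gi \<longleftrightarrow>
     (\<forall>x y z. (x, y) \<in> G2 \<and> (y, z) \<in> G2 \<longrightarrow>
        (gm x y, z) \<in> G2 \<and> (x, gm y z) \<in> G2 \<and> gm (gm x y) z = gm x (gm y z)) \<and>
     (\<forall>x. gi (gi x) = x) \<and>
     (\<forall>x. (gi x, x) \<in> G2) \<and>
     (\<forall>x y. (x, y) \<in> G2 \<longrightarrow> gm (gi x) (gm x y) = y \<and> gm (gm x y) (gi y) = x)"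

definition top_groupoid :: "('g::topological_space \<times> 'g) set \<Rightarrow> ('g \<Rightarrow> 'g \<Rightarrow> 'g) \<Rightarrow> ('g \<Rightarrow> 'g) \<Rightarrow> bool" where
  "top_groupoid G2 gm gi \<longleftrightarrow>
     groupoid G2 gm gi \<and>
     continuous_on G2 (\<lambda>(x, y). gm x y) \<and>
     continuous_on UNIV gi"

definition grp_r :: "('g \<Rightarrow> 'g \<Rightarrow> 'g) \<Rightarrow> ('g \<Rightarrow> 'g) \<Rightarrow> 'g \<Rightarrow> 'g" where
  "grp_r gm gi x = gm x (gi x)"

definition grp_d :: "('g \<Rightarrow> 'g \<Rightarrow> 'g) \<Rightarrow> ('g \<Rightarrow> 'g) \<Rightarrow> 'g \<Rightarrow> 'g" where
  "grp_d gm gi x = gm (gi x) x"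

definition unit_space :: "('g \<Rightarrow> 'g \<Rightarrow> 'g) \<Rightarrow> ('g \<Rightarrow> 'g) \<Rightarrow> 'g set" where
  "unit_space gm gi = range (grp_r gm gi)"

definition Cc :: "('g::topological_space \<Rightarrow> real) \<Rightarrow> bool" where
  "Cc f \<longleftrightarrow> continuous_on UNIV f \<and> compact (closure {x. f x \<noteq> 0})"

definition msupport :: "'g::topological_space measure \<Rightarrow> 'g set" where
  "msupport M = {x. \<forall>U. open U \<longrightarrow> x \<in> U \<longrightarrow> emeasure M U \<noteq> 0}"

definition left_haar_system ::
  "('g::topological_space \<times> 'g) set \<Rightarrow> ('g \<Rightarrow> 'g \<Rightarrow> 'g) \<Rightarrow> ('g \<Rightarrow> 'g) \<Rightarrow> ('g \<Rightarrow> 'g measure) \<Rightarrow> bool" where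
  "left_haar_system G2 gm gi lam \<longleftrightarrow>
     (\<forall>u\<in>unit_space gm gi.
        sets (lam u) = sets borel \<and>
        (\<forall>K. compact K \<longrightarrow> emeasure (lam u) K < \<infinity>) \<and>
        msupport (lam u) = {x. grp_r gm gi x = u}) \<and>
     (\<forall>f. Cc f \<longrightarrow> continuous_on (unit_space gm gi) (\<lambda>u. \<integral>x. f x \<partial>lam u)) \<and>
     (\<forall>x f. Cc f \<longrightarrow>
        (\<integral>y. f (gm x y) \<partial>lam (grp_d gm gi x)) = (\<integral>y. f y \<partial>lam (grp_r gm gi x)))"

definition N_function :: "(real \<Rightarrow> real) \<Rightarrow> bool" where
  "N_function \<Phi> \<longleftrightarrow>
     continuous_on UNIV \<Phi> \<and> (\<forall>x. \<Phi> (- x) = \<Phi> x) \<and> convex_on UNIV \<Phi> \<and>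
     (\<forall>x. \<Phi> x \<ge> 0) \<and> (\<forall>x. \<Phi> x = 0 \<longleftrightarrow> x = 0) \<and>
     ((\<lambda>x. \<Phi> x / x) \<longlongrightarrow> 0) (at 0) \<and>
     filterlim (\<lambda>x. \<Phi> x / x) at_top at_top"

definition complementary_fun :: "(real \<Rightarrow> real) \<Rightarrow> real \<Rightarrow> real" where
  "complementary_fun \<Phi> y = (SUP x\<in>{0..}. x * \<bar>y\<bar> - \<Phi> x)"

definition Delta2 :: "bool \<Rightarrow> (real \<Rightarrow> real) \<Rightarrow> bool" where
  "Delta2 is_compact \<Phi> \<longleftrightarrow>
     (if is_compact
      then (\<exists>x0>0. \<exists>k>0. \<forall>x\<ge>x0. \<Phi> (2 * x) \<le> k * \<Phi> x)
      else (\<exists>k>0. \<forall>x\<ge>0. \<Phi> (2 * x) \<le> k * \<Phi> x))"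

definition fibre_measure :: "('g \<Rightarrow> 'g measure) \<Rightarrow> ('g \<Rightarrow> 'g) \<Rightarrow> 'g \<Rightarrow> 'g measure" where
  "fibre_measure lam r u = restrict_space (lam u) {x. r x = u}"

definition orlicz_space :: "(real \<Rightarrow> real) \<Rightarrow> 'a measure \<Rightarrow> ('a \<Rightarrow> real) set" where
  "orlicz_space \<Phi> M = {f. f \<in> borel_measurable M \<and>
      (\<exists>\<alpha>>0. (\<integral>\<^sup>+x. ennreal (\<Phi> (\<alpha> * \<bar>f x\<bar>)) \<partial>M) < \<infinity>)}"

definition gauge_norm :: "(real \<Rightarrow> real) \<Rightarrow> 'a measure \<Rightarrow> ('a \<Rightarrow> real) \<Rightarrow> real" where
  "gauge_norm \<Phi> M f = Inf {k. k > 0 \<and> (\<integral>\<^sup>+x. ennreal (\<Phi> (\<bar>f x\<bar> / k)) \<partial>M) \<le> 1}"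

definition L1_norm :: "'a measure \<Rightarrow> ('a \<Rightarrow> real) \<Rightarrow> real" where
  "L1_norm M f = (\<integral>x. \<bar>f x\<bar> \<partial>M)"

text \<open>A section \<open>\<xi>\<close> assigns to each unit u a function \<open>\<xi> u\<close> on the fibre \<open>G^u\<close>
  (values off \<open>G^u\<close> are irrelevant: everything is computed on the fibre measure).\<close>

definition I0_Phi :: "(real \<Rightarrow> real) \<Rightarrow> ('g \<Rightarrow> 'g \<Rightarrow> 'g) \<Rightarrow> ('g \<Rightarrow> 'g) \<Rightarrow> ('g \<Rightarrow> 'g measure)
    \<Rightarrow> ('g \<Rightarrow> 'g \<Rightarrow> real) set" where
  "I0_Phi \<Phi> gm gi lam = {\<xi>.
     (\<forall>u\<in>unit_space gm gi. \<xi> u \<in> orlicz_space \<Phi> (fibre_measure lam (grp_r gm gi) u)) \<and>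
     (\<exists>C. \<forall>u\<in>unit_space gm gi. gauge_norm \<Phi> (fibre_measure lam (grp_r gm gi) u) (\<xi> u) \<le> C)}"

definition I1 :: "('g \<Rightarrow> 'g \<Rightarrow> 'g) \<Rightarrow> ('g \<Rightarrow> 'g) \<Rightarrow> ('g \<Rightarrow> 'g measure) \<Rightarrow> ('g \<Rightarrow> 'g \<Rightarrow> real) set" where
  "I1 gm gi lam = {\<xi>.
     (\<forall>u\<in>unit_space gm gi. integrable (fibre_measure lam (grp_r gm gi) u) (\<xi> u)) \<and>
     (\<exists>C. \<forall>u\<in>unit_space gm gi. L1_norm (fibre_measure lam (grp_r gm gi) u) (\<xi> u) \<le> C)}"

definition loc_close_vanishing ::
  "('g::topological_space \<Rightarrow> ('g \<Rightarrow> real) \<Rightarrow> real) \<Rightarrow> 'g set \<Rightarrow> ('g \<Rightarrow> 'g \<Rightarrow> real) \<Rightarrow> bool" where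
  "loc_close_vanishing N U \<xi> \<longleftrightarrow>
     (\<forall>u0\<in>U. \<forall>\<epsilon>>0. \<exists>f V. Cc f \<and> open V \<and> u0 \<in> V \<and>
         (\<forall>v\<in>V \<inter> U. N v (\<lambda>x. \<xi> v x - f x) < \<epsilon>)) \<and>
     (\<forall>\<epsilon>>0. \<exists>K. compact K \<and> K \<subseteq> U \<and> (\<forall>u\<in>U - K. N u (\<xi> u) < \<epsilon>))"

definition E0_Phi :: "(real \<Rightarrow> real) \<Rightarrow> ('g::topological_space \<Rightarrow> 'g \<Rightarrow> 'g) \<Rightarrow> ('g \<Rightarrow> 'g)
    \<Rightarrow> ('g \<Rightarrow> 'g measure) \<Rightarrow> ('g \<Rightarrow> 'g \<Rightarrow> real) set" where
  "E0_Phi \<Phi> gm gi lam = {\<xi>. \<xi> \<in> I0_Phi \<Phi> gm gi lam \<and>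
     loc_close_vanishing (\<lambda>u. gauge_norm \<Phi> (fibre_measure lam (grp_r gm gi) u))
        (unit_space gm gi) \<xi>}"

definition E1 :: "('g::topological_space \<Rightarrow> 'g \<Rightarrow> 'g) \<Rightarrow> ('g \<Rightarrow> 'g)
    \<Rightarrow> ('g \<Rightarrow> 'g measure) \<Rightarrow> ('g \<Rightarrow> 'g \<Rightarrow> real) set" where
  "E1 gm gi lam = {\<xi>. \<xi> \<in> I1 gm gi lam \<and>
     loc_close_vanishing (\<lambda>u. L1_norm (fibre_measure lam (grp_r gm gi) u))
        (unit_space gm gi) \<xi>}"

end

theory Submission
  imports Defs
begin


lemma phi_basic:
  assumes "N_function \<Phi>"
  shows "\<Phi> 0 = 0" "\<And>x. \<Phi> x \<ge> 0" "\<And>x. \<Phi> \<bar>x\<bar> = \<Phi> x"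
    "\<And>s x. 0 \<le> s \<Longrightarrow> s \<le> 1 \<Longrightarrow> \<Phi> (s * x) \<le> s * \<Phi> x"
    "\<And>x y. \<Phi> ((x + y) / 2) \<le> (\<Phi> x + \<Phi> y) / 2"
proof -
  have c: "convex_on UNIV \<Phi>" and z: "\<And>x. \<Phi> x = 0 \<longleftrightarrow> x = 0" and e: "\<And>x. \<Phi> (-x) = \<Phi> x"
    and p: "\<And>x. \<Phi> x \<ge> 0"
    using assms unfolding N_function_def by auto
  show "\<Phi> 0 = 0" using z by simp
  show "\<And>x. \<Phi> x \<ge> 0" by (rule p)
  show "\<Phi> \<bar>x\<bar> = \<Phi> x" for x using e[of x] by (cases "x \<ge> 0") auto
  show "\<Phi> (s * x) \<le> s * \<Phi> x" if "0 \<le> s" "s \<le> 1" for s x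
    using convex_onD[OF c, of s 0 x] that z[of 0] by simp
  show "\<Phi> ((x + y) / 2) \<le> (\<Phi> x + \<Phi> y) / 2" for x y
    using convex_onD[OF c, of "1/2" x y] by (simp add: field_simps)
qed

lemma phi_mono:
  assumes "N_function \<Phi>" "0 \<le> x" "x \<le> y"
  shows "\<Phi> x \<le> \<Phi> y"
proof (cases "y = 0")
  case True then show ?thesis using assms by simp
next
  case False
  then have "y > 0" using assms by simp
  have "\<Phi> ((x / y) * y) \<le> (x / y) * \<Phi> y"
    using phi_basic(4)[OF assms(1), of "x/y" y] assms \<open>y>0\<close> by simp
  also have "\<dots> \<le> 1 * \<Phi> y"
    using phi_basic(2)[OF assms(1), of y] assms \<open>y>0\<close>
    by (intro mult_right_mono) auto
  also have "\<dots> = \<Phi> y" by simp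
  finally show ?thesis using \<open>y>0\<close> by simp
qed

lemma phi_linear:
  assumes "N_function \<Phi>"
  obtains b where "b > 0" "\<And>t. 0 \<le> t \<Longrightarrow> t \<le> \<Phi> t + b"
proof -
  have "filterlim (\<lambda>x. \<Phi> x / x) at_top at_top" using assms unfolding N_function_def by auto
  then have "eventually (\<lambda>x. 1 \<le> \<Phi> x / x) at_top" by (simp add: filterlim_at_top)
  then obtain N where N: "\<And>x. x \<ge> N \<Longrightarrow> 1 \<le> \<Phi> x / x" by (auto simp: eventually_at_top_linorder)
  define b where "b = max N 1"
  have "t \<le> \<Phi> t + b" if "0 \<le> t" for t
  proof (cases "t \<ge> b")
    case True
    then have "t > 0" "1 \<le> \<Phi> t / t" using N[of t] by (auto simp: b_def)
    then have "t \<le> \<Phi> t" by (simp add: pos_le_divide_eq)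
    then show ?thesis by (simp add: b_def)
  next
    case False then show ?thesis using phi_basic(2)[OF assms, of t] by simp
  qed
  then show ?thesis using that[of b] by (simp add: b_def)
qed



lemma L1_from_k:
  assumes N: "N_function \<Phi>" and b: "\<And>t. 0 \<le> t \<Longrightarrow> t \<le> \<Phi> t + b" "b \<ge> 0"
    and fin: "emeasure M (space M) \<le> ennreal C" "C \<ge> 0"
    and meas: "h \<in> borel_measurable M" and k: "k > 0"
    and int: "(\<integral>\<^sup>+x. ennreal (\<Phi> (\<bar>h x\<bar> / k)) \<partial>M) \<le> 1"
  shows "integrable M h \<and> (\<integral>x. \<bar>h x\<bar> \<partial>M) \<le> k * (1 + b * C)"
proof -
  have pw: "ennreal \<bar>h x\<bar> \<le> ennreal k * ennreal (\<Phi> (\<bar>h x\<bar> / k)) + ennreal (k * b)" for x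
  proof -
    have "\<bar>h x\<bar> = k * (\<bar>h x\<bar> / k)" using k by simp
    also have "\<dots> \<le> k * (\<Phi> (\<bar>h x\<bar> / k) + b)" using b(1)[of "\<bar>h x\<bar> / k"] k by (intro mult_left_mono) auto
    finally have "\<bar>h x\<bar> \<le> k * \<Phi> (\<bar>h x\<bar> / k) + k * b" by (simp add: algebra_simps)
    then have "ennreal \<bar>h x\<bar> \<le> ennreal (k * \<Phi> (\<bar>h x\<bar> / k) + k * b)" by (rule ennreal_leI)
    also have "\<dots> = ennreal k * ennreal (\<Phi> (\<bar>h x\<bar> / k)) + ennreal (k * b)"
      using k b(2) phi_basic(2)[OF N] by (simp add: ennreal_plus ennreal_mult)
    finally show ?thesis .
  qed
  have m2: "(\<lambda>x. ennreal (\<Phi> (\<bar>h x\<bar> / k))) \<in> borel_measurable M"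
  proof -
    have "continuous_on UNIV \<Phi>" using N unfolding N_function_def by auto
    then have "\<Phi> \<in> borel_measurable borel" by (rule borel_measurable_continuous_onI)
    then show ?thesis using meas by measurable
  qed
  have "(\<integral>\<^sup>+x. ennreal \<bar>h x\<bar> \<partial>M) \<le> (\<integral>\<^sup>+x. ennreal k * ennreal (\<Phi> (\<bar>h x\<bar> / k)) + ennreal (k * b) \<partial>M)"
    by (intro nn_integral_mono pw)
  also have "\<dots> = ennreal k * (\<integral>\<^sup>+x. ennreal (\<Phi> (\<bar>h x\<bar> / k)) \<partial>M) + ennreal (k * b) * emeasure M (space M)"
    using m2 by (simp add: nn_integral_add nn_integral_cmult)
  also have "\<dots> \<le> ennreal k * 1 + ennreal (k * b) * ennreal C"
    using int fin by (intro add_mono mult_left_mono) auto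
  also have "\<dots> = ennreal k + ennreal (k * b * C)"
    using k b fin by (simp add: ennreal_mult[symmetric])
  also have "\<dots> = ennreal (k + k * b * C)"
    using k b fin by (intro ennreal_plus[symmetric]) auto
  also have "k + k * b * C = k * (1 + b * C)" by (simp add: algebra_simps)
  finally have I: "(\<integral>\<^sup>+x. ennreal \<bar>h x\<bar> \<partial>M) \<le> ennreal (k * (1 + b * C))" .
  have ih: "integrable M h"
    using I by (intro integrableI_bounded meas) (auto simp: top_unique less_top[symmetric])
  then have "integrable M (\<lambda>x. \<bar>h x\<bar>)" by auto
  then have "(\<integral>\<^sup>+x. ennreal \<bar>h x\<bar> \<partial>M) = ennreal (\<integral>x. \<bar>h x\<bar> \<partial>M)"
    by (intro nn_integral_eq_integral) auto
  with I have "ennreal (\<integral>x. \<bar>h x\<bar> \<partial>M) \<le> ennreal (k * (1 + b * C))" by simp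
  then have "(\<integral>x. \<bar>h x\<bar> \<partial>M) \<le> k * (1 + b * C)"
    using k b fin by (subst (asm) ennreal_le_iff) auto
  with ih show ?thesis by simp
qed

lemma L1_le_gauge:
  assumes N: "N_function \<Phi>" and b: "\<And>t. 0 \<le> t \<Longrightarrow> t \<le> \<Phi> t + b" "b \<ge> 0"
    and fin: "emeasure M (space M) \<le> ennreal C" "C \<ge> 0"
    and meas: "h \<in> borel_measurable M"
    and ne: "\<exists>k>0. (\<integral>\<^sup>+x. ennreal (\<Phi> (\<bar>h x\<bar> / k)) \<partial>M) \<le> 1"
  shows "integrable M h \<and> L1_norm M h \<le> (1 + b * C) * gauge_norm \<Phi> M h"
proof -
  let ?S = "{k. k > 0 \<and> (\<integral>\<^sup>+x. ennreal (\<Phi> (\<bar>h x\<bar> / k)) \<partial>M) \<le> 1}"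
  have D: "1 + b * C > 0" using b fin by (simp add: add_pos_nonneg)
  have S: "?S \<noteq> {}" using ne by auto
  have all: "integrable M h \<and> L1_norm M h \<le> k * (1 + b * C)" if "k \<in> ?S" for k
    using L1_from_k[OF N b fin meas, of k] that unfolding L1_norm_def by auto
  then have "L1_norm M h / (1 + b * C) \<le> k" if "k \<in> ?S" for k
    using that D by (simp add: pos_divide_le_eq)
  then have "L1_norm M h / (1 + b * C) \<le> Inf ?S" using S by (intro cInf_greatest) auto
  then have "L1_norm M h \<le> (1 + b * C) * gauge_norm \<Phi> M h"
    using D unfolding gauge_norm_def by (simp add: pos_divide_le_eq mult.commute)
  moreover have "integrable M h" using all S by auto
  ultimately show ?thesis by simp
qed

lemma gauge_set_nonempty:
  assumes N: "N_function \<Phi>" and a: "\<alpha> > 0"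
    and fin: "(\<integral>\<^sup>+x. ennreal (\<Phi> (\<alpha> * \<bar>h x\<bar>)) \<partial>M) < \<infinity>"
    and meas: "h \<in> borel_measurable M"
  shows "\<exists>k>0. (\<integral>\<^sup>+x. ennreal (\<Phi> (\<bar>h x\<bar> / k)) \<partial>M) \<le> 1"
proof -
  define I where "I = (\<integral>\<^sup>+x. ennreal (\<Phi> (\<alpha> * \<bar>h x\<bar>)) \<partial>M)"
  define r where "r = enn2real I"
  have Ir: "I = ennreal r" using fin unfolding r_def I_def by simp
  have r0: "r \<ge> 0" unfolding r_def by simp
  define s where "s = 1 / (r + 1)"
  have s: "0 < s" "s \<le> 1" using r0 by (auto simp: s_def)
  define k where "k = (r + 1) / \<alpha>"
  have k: "k > 0" using r0 a by (simp add: k_def)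
  have eq: "\<bar>h x\<bar> / k = s * (\<alpha> * \<bar>h x\<bar>)" for x using r0 a by (simp add: k_def s_def field_simps)
  have m2: "(\<lambda>x. ennreal (\<Phi> (\<alpha> * \<bar>h x\<bar>))) \<in> borel_measurable M"
  proof -
    have "continuous_on UNIV \<Phi>" using N unfolding N_function_def by auto
    then have "\<Phi> \<in> borel_measurable borel" by (rule borel_measurable_continuous_onI)
    then show ?thesis using meas by measurable
  qed
  have "(\<integral>\<^sup>+x. ennreal (\<Phi> (\<bar>h x\<bar> / k)) \<partial>M) \<le> (\<integral>\<^sup>+x. ennreal s * ennreal (\<Phi> (\<alpha> * \<bar>h x\<bar>)) \<partial>M)"
    unfolding eq using s phi_basic(4)[OF N, of s] phi_basic(2)[OF N]
    by (intro nn_integral_mono) (simp add: ennreal_mult[symmetric] ennreal_leI)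
  also have "\<dots> = ennreal s * I" unfolding I_def by (rule nn_integral_cmult[OF m2])
  also have "\<dots> = ennreal (s * r)" using Ir s r0 by (simp add: ennreal_mult)
  also have "\<dots> \<le> 1" using r0 by (simp add: s_def)
  finally show ?thesis using k by auto
qed



lemma phi_meas:
  assumes N: "N_function \<Phi>" and meas: "h \<in> borel_measurable M"
  shows "(\<lambda>x. ennreal (\<Phi> (c * \<bar>h x\<bar>))) \<in> borel_measurable M"
proof -
  have "continuous_on UNIV \<Phi>" using N unfolding N_function_def by auto
  then have "\<Phi> \<in> borel_measurable borel" by (rule borel_measurable_continuous_onI)
  then show ?thesis using meas by measurable
qed

lemma diff_fin:
  assumes N: "N_function \<Phi>" and g: "g \<in> borel_measurable M" and k1: "k1 > 0"
    and gi: "(\<integral>\<^sup>+x. ennreal (\<Phi> (\<bar>g x\<bar> / k1)) \<partial>M) \<le> 1"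
    and fB: "\<And>x. \<bar>f x\<bar> \<le> B"
    and fin: "emeasure M (space M) \<le> ennreal C"
  shows "(\<integral>\<^sup>+x. ennreal (\<Phi> ((1 / (2 * k1)) * \<bar>g x - f x\<bar>)) \<partial>M) < \<infinity>"
proof -
  have pw: "\<Phi> ((1 / (2 * k1)) * \<bar>g x - f x\<bar>) \<le> \<Phi> (\<bar>g x\<bar> / k1) + \<Phi> (B / k1)" for x
  proof -
    have "(1 / (2 * k1)) * \<bar>g x - f x\<bar> \<le> (\<bar>g x\<bar> / k1 + B / k1) / 2"
    proof -
      have "\<bar>g x - f x\<bar> \<le> \<bar>g x\<bar> + B" using fB[of x] by linarith
      then have "(1 / (2 * k1)) * \<bar>g x - f x\<bar> \<le> (1 / (2 * k1)) * (\<bar>g x\<bar> + B)"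
        using k1 by (intro mult_left_mono) auto
      also have "(1 / (2 * k1)) * (\<bar>g x\<bar> + B) = (\<bar>g x\<bar> / k1 + B / k1) / 2"
        using k1 by (simp add: add_divide_distrib[symmetric])
      finally show ?thesis .
    qed
    then have "\<Phi> ((1 / (2 * k1)) * \<bar>g x - f x\<bar>) \<le> \<Phi> ((\<bar>g x\<bar> / k1 + B / k1) / 2)"
      using k1 by (intro phi_mono[OF N]) auto
    also have "\<dots> \<le> (\<Phi> (\<bar>g x\<bar> / k1) + \<Phi> (B / k1)) / 2" by (rule phi_basic(5)[OF N])
    also have "\<dots> \<le> \<Phi> (\<bar>g x\<bar> / k1) + \<Phi> (B / k1)" using phi_basic(2)[OF N] by simp
    finally show ?thesis .
  qed
  have m: "(\<lambda>x. ennreal (\<Phi> (\<bar>g x\<bar> / k1))) \<in> borel_measurable M"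
  proof -
    have "continuous_on UNIV \<Phi>" using N unfolding N_function_def by auto
    then have "\<Phi> \<in> borel_measurable borel" by (rule borel_measurable_continuous_onI)
    then show ?thesis using g by measurable
  qed
  have "(\<integral>\<^sup>+x. ennreal (\<Phi> ((1 / (2 * k1)) * \<bar>g x - f x\<bar>)) \<partial>M)
      \<le> (\<integral>\<^sup>+x. ennreal (\<Phi> (\<bar>g x\<bar> / k1)) + ennreal (\<Phi> (B / k1)) \<partial>M)"
  proof (intro nn_integral_mono)
    fix x
    have "ennreal (\<Phi> ((1 / (2 * k1)) * \<bar>g x - f x\<bar>)) \<le> ennreal (\<Phi> (\<bar>g x\<bar> / k1) + \<Phi> (B / k1))"
      using pw by (rule ennreal_leI)
    also have "\<dots> = ennreal (\<Phi> (\<bar>g x\<bar> / k1)) + ennreal (\<Phi> (B / k1))"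
      using phi_basic(2)[OF N] by (intro ennreal_plus)
    finally show "ennreal (\<Phi> ((1 / (2 * k1)) * \<bar>g x - f x\<bar>)) \<le> ennreal (\<Phi> (\<bar>g x\<bar> / k1)) + ennreal (\<Phi> (B / k1))" .
  qed
  also have "\<dots> = (\<integral>\<^sup>+x. ennreal (\<Phi> (\<bar>g x\<bar> / k1)) \<partial>M) + ennreal (\<Phi> (B / k1)) * emeasure M (space M)"
    using m by (simp add: nn_integral_add)
  also have "\<dots> \<le> 1 + ennreal (\<Phi> (B / k1)) * ennreal C"
    using gi fin by (intro add_mono mult_left_mono) auto
  also have "\<dots> < \<infinity>" by (simp add: ennreal_mult_eq_top_iff less_top[symmetric])
  finally show ?thesis .
qed

lemma bounded_obtain: fixes f :: "'a::topological_space \<Rightarrow> real" assumes "bounded (f ` K)" obtains B where "\<forall>y\<in>f ` K. norm y \<le> B"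
  using assms unfolding bounded_iff by blast

lemma Cc_bounded:
  assumes "Cc f" obtains B where "\<And>x. \<bar>f x\<bar> \<le> B"
proof -
  define K where "K = closure {x. f x \<noteq> 0}"
  have c: "continuous_on UNIV f" and Kc: "compact K" using assms unfolding Cc_def K_def by auto
  have "continuous_on K f" using c by (rule continuous_on_subset) simp
  then have "compact (f ` K)" using Kc by (rule compact_continuous_image)
  then have "bounded (f ` K)" by (rule compact_imp_bounded)
  then obtain B where B: "\<forall>y\<in>f ` K. norm y \<le> B" by (rule bounded_obtain)
  have "\<bar>f x\<bar> \<le> max B 0" for x
  proof (cases "f x = 0")
    case False
    then have "x \<in> {x. f x \<noteq> 0}" by simp
    then have "x \<in> K" unfolding K_def by (rule closure_subset[THEN subsetD])
    then have "f x \<in> f ` K" by (rule imageI)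
    then have "norm (f x) \<le> B" using B by (rule bspec[rotated])
    then show ?thesis by simp
  next
    case True then show ?thesis by simp
  qed
  then show ?thesis using that by blast
qed


lemma r_cont:
  assumes "top_groupoid G2 gm gi"
  shows "continuous_on UNIV (grp_r gm gi)"
proof -
  have g: "groupoid G2 gm gi" and cm: "continuous_on G2 (\<lambda>(x, y). gm x y)" and ci: "continuous_on UNIV gi"
    using assms unfolding top_groupoid_def by auto
  have pair: "continuous_on UNIV (\<lambda>x. (x, gi x))" by (intro continuous_on_Pair continuous_on_id ci)
  have into: "(\<lambda>x. (x, gi x)) ` UNIV \<subseteq> G2"
  proof
    fix z assume "z \<in> (\<lambda>x. (x, gi x)) ` UNIV"
    then obtain x where z: "z = (x, gi x)" by auto
    have "(gi (gi x), gi x) \<in> G2" using g unfolding groupoid_def by blast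
    moreover have "gi (gi x) = x" using g unfolding groupoid_def by blast
    ultimately have "(x, gi x) \<in> G2" by simp
    then show "z \<in> G2" using z by simp
  qed
  have "continuous_on UNIV (\<lambda>x. (\<lambda>(x, y). gm x y) (x, gi x))"
    by (rule continuous_on_compose2[OF cm pair into])
  then show ?thesis unfolding grp_r_def[abs_def] by simp
qed

lemma fibre_sets:
  fixes gm :: "'g::t2_space \<Rightarrow> 'g \<Rightarrow> 'g"
  assumes "top_groupoid G2 gm gi"
  shows "{x. grp_r gm gi x = u} \<in> sets borel"
proof -
  have "closed {x. grp_r gm gi x = (\<lambda>_. u) x}"
    by (intro closed_Collect_eq r_cont[OF assms] continuous_on_const)
  then show ?thesis by simp
qed

lemma fibre_facts:
  fixes gm :: "'g::t2_space \<Rightarrow> 'g \<Rightarrow> 'g"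
  assumes tg: "top_groupoid G2 gm gi" and lh: "left_haar_system G2 gm gi lam"
    and u: "u \<in> unit_space gm gi"
  shows "emeasure (fibre_measure lam (grp_r gm gi) u) (space (fibre_measure lam (grp_r gm gi) u))
           \<le> emeasure (lam u) UNIV"
    and "\<And>f. Cc f \<Longrightarrow> f \<in> borel_measurable (fibre_measure lam (grp_r gm gi) u)"
proof -
  have s: "sets (lam u) = sets borel" using lh u unfolding left_haar_system_def by auto
  then have sp: "space (lam u) = UNIV" using sets_eq_imp_space_eq by fastforce
  have fs: "{x. grp_r gm gi x = u} \<in> sets (lam u)" using fibre_sets[OF tg] s by simp
  have sp2: "space (fibre_measure lam (grp_r gm gi) u) = {x. grp_r gm gi x = u}"
    unfolding fibre_measure_def using sp by (simp add: space_restrict_space)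
  have "emeasure (fibre_measure lam (grp_r gm gi) u) (space (fibre_measure lam (grp_r gm gi) u))
      = emeasure (lam u) {x. grp_r gm gi x = u}"
    unfolding sp2 unfolding fibre_measure_def using fs sp by (intro emeasure_restrict_space) auto
  also have "\<dots> \<le> emeasure (lam u) UNIV"
    using sp by (intro emeasure_mono) (auto simp: sets.top[of "lam u", unfolded sp])
  finally show "emeasure (fibre_measure lam (grp_r gm gi) u) (space (fibre_measure lam (grp_r gm gi) u))
           \<le> emeasure (lam u) UNIV" .
  show "f \<in> borel_measurable (fibre_measure lam (grp_r gm gi) u)" if "Cc f" for f
  proof -
    have "continuous_on UNIV f" using that unfolding Cc_def by auto
    then have fb: "f \<in> borel_measurable borel" by (rule borel_measurable_continuous_onI)
    have eq: "measurable (lam u) borel = measurable borel borel" by (rule measurable_cong_sets[OF s refl])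
    have "f \<in> borel_measurable (lam u)" by (subst eq) (rule fb)
    then show ?thesis unfolding fibre_measure_def by (rule measurable_restrict_space1)
  qed
qed



lemma main_incl:
  fixes gm :: "'g::t2_space \<Rightarrow> 'g \<Rightarrow> 'g"
  assumes N: "N_function \<Phi>" and tg: "top_groupoid G2 gm gi" and lh: "left_haar_system G2 gm gi lam"
    and Cb: "\<And>u. u \<in> unit_space gm gi \<Longrightarrow> emeasure (lam u) UNIV \<le> ennreal C" and C0: "C \<ge> 0"
  shows "I0_Phi \<Phi> gm gi lam \<subseteq> I1 gm gi lam \<and> E0_Phi \<Phi> gm gi lam \<subseteq> E1 gm gi lam"
proof -
  define US where "US = unit_space gm gi"
  define F where "F = fibre_measure lam (grp_r gm gi)"
  obtain b where b: "b > 0" "\<And>t. 0 \<le> t \<Longrightarrow> t \<le> \<Phi> t + b" using phi_linear[OF N] by blast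
  define D where "D = 1 + b * C"
  have D: "D > 0" using b C0 unfolding D_def by (simp add: add_pos_nonneg)
  have finF: "emeasure (F u) (space (F u)) \<le> ennreal C" if "u \<in> US" for u
    using fibre_facts(1)[OF tg lh, of u] Cb[of u] that unfolding F_def US_def by simp
  have key: "integrable (F u) h \<and> L1_norm (F u) h \<le> D * gauge_norm \<Phi> (F u) h"
    if u: "u \<in> US" and h: "h \<in> orlicz_space \<Phi> (F u)" for u h
  proof -
    from h obtain \<alpha> where hm: "h \<in> borel_measurable (F u)" and a: "\<alpha> > 0"
      and fin: "(\<integral>\<^sup>+x. ennreal (\<Phi> (\<alpha> * \<bar>h x\<bar>)) \<partial>F u) < \<infinity>"
      unfolding orlicz_space_def by blast
    have ne: "\<exists>k>0. (\<integral>\<^sup>+x. ennreal (\<Phi> (\<bar>h x\<bar> / k)) \<partial>F u) \<le> 1"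
      by (rule gauge_set_nonempty[OF N a fin hm])
    show ?thesis using L1_le_gauge[OF N b(2) _ finF[OF u] C0 hm ne] b unfolding D_def by simp
  qed
  have diff: "(\<lambda>x. g x - f x) \<in> orlicz_space \<Phi> (F u)"
    if u: "u \<in> US" and g: "g \<in> orlicz_space \<Phi> (F u)" and f: "Cc f" for u g f
  proof -
    from g obtain \<alpha> where gm: "g \<in> borel_measurable (F u)" and a: "\<alpha> > 0"
      and fin: "(\<integral>\<^sup>+x. ennreal (\<Phi> (\<alpha> * \<bar>g x\<bar>)) \<partial>F u) < \<infinity>"
      unfolding orlicz_space_def by blast
    obtain k1 where k1: "k1 > 0" "(\<integral>\<^sup>+x. ennreal (\<Phi> (\<bar>g x\<bar> / k1)) \<partial>F u) \<le> 1"
      using gauge_set_nonempty[OF N a fin gm] by blast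
    obtain B where B: "\<And>x. \<bar>f x\<bar> \<le> B" using Cc_bounded[OF f] by blast
    have fm: "f \<in> borel_measurable (F u)"
      using fibre_facts(2)[OF tg lh, of u f] u f unfolding F_def US_def by simp
    have "(\<integral>\<^sup>+x. ennreal (\<Phi> ((1 / (2 * k1)) * \<bar>g x - f x\<bar>)) \<partial>F u) < \<infinity>"
      by (rule diff_fin[OF N gm k1 B finF[OF u]])
    moreover have "(\<lambda>x. g x - f x) \<in> borel_measurable (F u)" using gm fm by measurable
    moreover have "1 / (2 * k1) > 0" using k1 by simp
    ultimately show ?thesis unfolding orlicz_space_def by blast
  qed
  have I: "\<xi> \<in> I1 gm gi lam" if xi: "\<xi> \<in> I0_Phi \<Phi> gm gi lam" for \<xi>
  proof -
    from xi have o: "\<And>u. u \<in> US \<Longrightarrow> \<xi> u \<in> orlicz_space \<Phi> (F u)"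
      and "\<exists>C'. \<forall>u\<in>US. gauge_norm \<Phi> (F u) (\<xi> u) \<le> C'"
      unfolding I0_Phi_def US_def F_def by auto
    then obtain C' where C': "\<And>u. u \<in> US \<Longrightarrow> gauge_norm \<Phi> (F u) (\<xi> u) \<le> C'" by blast
    have "integrable (F u) (\<xi> u)" if "u \<in> US" for u using key[OF that o[OF that]] by simp
    moreover have "L1_norm (F u) (\<xi> u) \<le> D * C'" if "u \<in> US" for u
    proof -
      have "L1_norm (F u) (\<xi> u) \<le> D * gauge_norm \<Phi> (F u) (\<xi> u)" using key[OF that o[OF that]] by simp
      also have "\<dots> \<le> D * C'" using C'[OF that] D by (intro mult_left_mono) auto
      finally show ?thesis .
    qed
    ultimately show ?thesis unfolding I1_def US_def F_def by blast
  qed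
  have E: "\<xi> \<in> E1 gm gi lam" if xi: "\<xi> \<in> E0_Phi \<Phi> gm gi lam" for \<xi>
  proof -
    from xi have x0: "\<xi> \<in> I0_Phi \<Phi> gm gi lam"
      and lc: "loc_close_vanishing (\<lambda>u. gauge_norm \<Phi> (F u)) US \<xi>"
      unfolding E0_Phi_def US_def F_def by auto
    have o: "\<And>u. u \<in> US \<Longrightarrow> \<xi> u \<in> orlicz_space \<Phi> (F u)"
      using x0 unfolding I0_Phi_def US_def F_def by auto
    have lc1: "\<forall>u0\<in>US. \<forall>\<epsilon>>0. \<exists>f V. Cc f \<and> open V \<and> u0 \<in> V \<and>
         (\<forall>v\<in>V \<inter> US. L1_norm (F v) (\<lambda>x. \<xi> v x - f x) < \<epsilon>)"
    proof (intro ballI allI impI)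
      fix u0 :: 'g and \<epsilon> :: real assume u0: "u0 \<in> US" and e: "\<epsilon> > 0"
      then have "\<epsilon> / D > 0" using D by simp
      then obtain f V where f: "Cc f" "open V" "u0 \<in> V"
        and fV: "\<And>v. v \<in> V \<inter> US \<Longrightarrow> gauge_norm \<Phi> (F v) (\<lambda>x. \<xi> v x - f x) < \<epsilon> / D"
        using lc u0 unfolding loc_close_vanishing_def by meson
      have "L1_norm (F v) (\<lambda>x. \<xi> v x - f x) < \<epsilon>" if v: "v \<in> V \<inter> US" for v
      proof -
        have "L1_norm (F v) (\<lambda>x. \<xi> v x - f x) \<le> D * gauge_norm \<Phi> (F v) (\<lambda>x. \<xi> v x - f x)"
          using key[of v "\<lambda>x. \<xi> v x - f x"] diff[of v "\<xi> v" f] o[of v] v f(1) by auto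
        also have "\<dots> < D * (\<epsilon> / D)" using fV[OF v] D by (intro mult_strict_left_mono) auto
        also have "\<dots> = \<epsilon>" using D by simp
        finally show ?thesis .
      qed
      then show "\<exists>f V. Cc f \<and> open V \<and> u0 \<in> V \<and>
         (\<forall>v\<in>V \<inter> US. L1_norm (F v) (\<lambda>x. \<xi> v x - f x) < \<epsilon>)" using f by blast
    qed
    have lc2: "\<forall>\<epsilon>>0. \<exists>K. compact K \<and> K \<subseteq> US \<and> (\<forall>u\<in>US - K. L1_norm (F u) (\<xi> u) < \<epsilon>)"
    proof (intro allI impI)
      fix \<epsilon> :: real assume e: "\<epsilon> > 0"
      then have "\<epsilon> / D > 0" using D by simp
      then obtain K where K: "compact K" "K \<subseteq> US"
        and KV: "\<And>u. u \<in> US - K \<Longrightarrow> gauge_norm \<Phi> (F u) (\<xi> u) < \<epsilon> / D"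
        using lc unfolding loc_close_vanishing_def by meson
      have "L1_norm (F u) (\<xi> u) < \<epsilon>" if u: "u \<in> US - K" for u
      proof -
        have "L1_norm (F u) (\<xi> u) \<le> D * gauge_norm \<Phi> (F u) (\<xi> u)"
          using key[of u "\<xi> u"] o[of u] u by auto
        also have "\<dots> < D * (\<epsilon> / D)" using KV[OF u] D by (intro mult_strict_left_mono) auto
        also have "\<dots> = \<epsilon>" using D by simp
        finally show ?thesis .
      qed
      then show "\<exists>K. compact K \<and> K \<subseteq> US \<and> (\<forall>u\<in>US - K. L1_norm (F u) (\<xi> u) < \<epsilon>)"
        using K by blast
    qed
    have "loc_close_vanishing (\<lambda>u. L1_norm (F u)) US \<xi>"
      unfolding loc_close_vanishing_def using lc1 lc2 by blast
    then show ?thesis using I[OF x0] unfolding E1_def US_def F_def by blast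
  qed
  show ?thesis using I E by blast
qed



theorem lemma3p11:
  fixes G2 :: "('g::{t2_space, second_countable_topology} \<times> 'g) set"
    and gm :: "'g \<Rightarrow> 'g \<Rightarrow> 'g" and gi :: "'g \<Rightarrow> 'g"
    and lam :: "'g \<Rightarrow> 'g measure"
    and \<Phi> \<Psi> :: "real \<Rightarrow> real"
  assumes "locally_compact_space (euclidean :: 'g topology)"
    and "top_groupoid G2 gm gi"
    and "left_haar_system G2 gm gi lam"
    and "N_function \<Phi>" and "\<Psi> = complementary_fun \<Phi>" and "N_function \<Psi>"
    and "Delta2 (compact (UNIV :: 'g set)) \<Phi>"
  shows "((SUP u\<in>unit_space gm gi. emeasure (lam u) UNIV) < \<infinity> \<longrightarrow>
            I0_Phi \<Phi> gm gi lam \<subseteq> I1 gm gi lam \<and> E0_Phi \<Phi> gm gi lam \<subseteq> E1 gm gi lam)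
       \<and> (compact (UNIV :: 'g set) \<longrightarrow>
            I0_Phi \<Phi> gm gi lam \<subseteq> I1 gm gi lam \<and> E0_Phi \<Phi> gm gi lam \<subseteq> E1 gm gi lam)"
proof -
  note tg = assms(2) and lh = assms(3) and N = assms(4)
  define S where "S = (SUP u\<in>unit_space gm gi. emeasure (lam u) UNIV)"
  have part1: "I0_Phi \<Phi> gm gi lam \<subseteq> I1 gm gi lam \<and> E0_Phi \<Phi> gm gi lam \<subseteq> E1 gm gi lam"
    if fin: "S < \<infinity>"
  proof -
    have "emeasure (lam u) UNIV \<le> ennreal (enn2real S)" if "u \<in> unit_space gm gi" for u
    proof -
      have "emeasure (lam u) UNIV \<le> S" unfolding S_def using that by (rule SUP_upper)
      also have "S = ennreal (enn2real S)" using fin by simp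
      finally show ?thesis .
    qed
    then show ?thesis by (intro main_incl[OF N tg lh, of "enn2real S"]) auto
  qed
  have part2: "S < \<infinity>" if cU: "compact (UNIV :: 'g set)"
  proof -
    have sp: "space (lam u) = UNIV" if "u \<in> unit_space gm gi" for u
    proof -
      have "sets (lam u) = sets borel" using lh that unfolding left_haar_system_def by auto
      then show ?thesis using sets_eq_imp_space_eq by fastforce
    qed
    have finu: "emeasure (lam u) UNIV < \<infinity>" if "u \<in> unit_space gm gi" for u
      using lh that cU unfolding left_haar_system_def by auto
    have "Cc (\<lambda>x::'g. 1::real)" unfolding Cc_def using cU by (simp add: continuous_on_const)
    then have cont: "continuous_on (unit_space gm gi) (\<lambda>u. \<integral>x. (1::real) \<partial>lam u)"
      using lh unfolding left_haar_system_def by blast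
    have "compact (unit_space gm gi)" unfolding unit_space_def
      by (rule compact_continuous_image[OF r_cont[OF tg] cU])
    then have "compact ((\<lambda>u. \<integral>x. (1::real) \<partial>lam u) ` unit_space gm gi)"
      by (rule compact_continuous_image[OF cont])
    then have "bounded ((\<lambda>u. \<integral>x. (1::real) \<partial>lam u) ` unit_space gm gi)" by (rule compact_imp_bounded)
    then obtain B where B: "\<forall>y\<in>(\<lambda>u. \<integral>x. (1::real) \<partial>lam u) ` unit_space gm gi. norm y \<le> B"
      by (rule bounded_obtain)
    have "emeasure (lam u) UNIV \<le> ennreal B" if u: "u \<in> unit_space gm gi" for u
    proof -
      have "(\<integral>x. (1::real) \<partial>lam u) \<in> (\<lambda>u. \<integral>x. (1::real) \<partial>lam u) ` unit_space gm gi"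
        using u by (rule imageI)
      then have "norm (\<integral>x. (1::real) \<partial>lam u) \<le> B" using B by (rule bspec[rotated])
      moreover have "(\<integral>x. (1::real) \<partial>lam u) = measure (lam u) UNIV" using sp[OF u] by simp
      ultimately have mB: "measure (lam u) UNIV \<le> B" by simp
      have "emeasure (lam u) UNIV = ennreal (measure (lam u) UNIV)"
        using finu[OF u] by (intro emeasure_eq_ennreal_measure) simp
      also have "\<dots> \<le> ennreal B" using mB by (rule ennreal_leI)
      finally show ?thesis .
    qed
    then have "S \<le> ennreal B" unfolding S_def by (rule SUP_least)
    also have "\<dots> < \<infinity>" by simp
    finally show ?thesis .
  qed
  show ?thesis using part1 part2 unfolding S_def by blast
qed


end
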